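(* Consider the algorithm AASGDA described in the context and assume (A3)–(A5). Then for every $t\ge0$, with $\mathbb{E}_t[\cdot]=\mathbb{E}[\cdot\mid(x^t,y^t,\psi^t)]$ and $\mathbb{E}_{\hat t}[\cdot]=\mathbb{E}[\cdot\mid(x^{t+1},y^t,\psi^t)]$: (a) $\|\mathbb{E}_t[G_x^t(x^t,y^t,z_x^t)]-\nabla_x\mathcal{L}(x^t,y^t)\|\le L_1\|\nabla_x\psi^t(x^t,y^t)-\nabla_x\psi(x^t,y^t)\|_F$; (b) $\mathbb{E}_t\|G_x^t(x^t,y^t,z_x^t)\|^2\le\|\mathbb{E}_t[G_x^t(x^t,y^t,z_x^t)]\|^2+(1+\|\nabla_x\psi^t(x^t,y^t)\|_F^2)\sigma^2$; (c) $\|\mathbb{E}_{\hat t}[G_y^t(x^{t+1},y^t,z_y^t)]-\nabla_y\mathcal{L}(x^{t+1},y^t)\|\le L_1\|\nabla_y\psi^t(x^{t+1},y^t)-\nabla_y\psi(x^{t+1},y^t)\|_F$; (d) $\mathbb{E}_{\hat t}\|G_y^t(x^{t+1},y^t,z_y^t)\|^2\le\|\mathbb{E}_{\hat t}[G_y^t(x^{t+1},y^t,z_y^t)]\|^2+(1+\|\nabla_y\psi^t(x^{t+1},y^t)\|_F^2)\sigma^2$.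
   Context: Let $n,m,d$ be positive integers. Let $l:\mathbb{R}^n\times\mathbb{R}^m\times\mathbb{R}^d\to\mathbb{R}$ be continuously differentiable with partial gradients $\nabla_x l,\nabla_y l,\nabla_z l$; write $\nabla_{x,z}l=(\nabla_x l,\nabla_z l)$, $\nabla_{y,z}l=(\nabla_y l,\nabla_z l)$. Let $\mathbb{P}$ be a probability measure on $\mathbb{R}^d$ and $\psi:\mathbb{R}^n\times\mathbb{R}^m\to\mathbb{R}^d$ differentiable with partial Jacobians $\nabla_x\psi,\nabla_y\psi$; $\|\cdot\|_F$ is the Frobenius norm. $\mathcal{D}(x,y)$ is the law of $\psi(x,y)+\xi$, $\xi\sim\mathbb{P}$, and $\mathcal{L}(x,y)=\mathbb{E}_{z\sim\mathcal{D}(x,y)}[l(x,y,z)]$ (assumed differentiable with $\nabla_x\mathcal{L}(x,y)=\mathbb{E}_{z\sim\mathcal{D}(x,y)}[\nabla_x l+\nabla_x\psi(x,y)^\top\nabla_z l]$ and analogously for $y$). Assumptions (constants $L_0,\ell_0,L_1,\sigma>0$): (A3) For all $(x,y)$: $\mathbb{E}_{z\sim\mathcal{D}(x,y)}\|\nabla_x l(x,y,z)\|\le L_1$, $\mathbb{E}_{z\sim\mathcal{D}(x,y)}\|\nabla_z l(x,y,z)\|\le L_1$. (A4) For all $(x,y)$: $\mathbb{E}_{z\sim\mathcal{D}(x,y)}\|\nabla_{x,z}l-\mathbb{E}\nabla_{x,z}l\|^2\le\sigma^2$ and $\mathbb{E}_{z\sim\mathcal{D}(x,y)}\|\nabla_{y,z}l-\mathbb{E}\nabla_{y,z}l\|^2\le\sigma^2$.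 (A5) $\psi$ is $L_0$-Lipschitz and $\ell_0$-smooth. AASGDA (stepsizes $\eta_x,\eta_y>0$): start from $x^0\in\mathbb{R}^n$, $y^0\in\mathbb{R}^m$, initial estimate $\psi^0$. At iteration $t$, given $(x^t,y^t)$ and the current estimate $\psi^t$ (a differentiable map, possibly random, determined by the history), with $G_x^t(x,y,z)=\nabla_x l(x,y,z)+\nabla_x\psi^t(x,y)^\top\nabla_z l(x,y,z)$ and $G_y^t(x,y,z)=\nabla_y l(x,y,z)+\nabla_y\psi^t(x,y)^\top\nabla_z l(x,y,z)$: draw $z_x^t$ with law $\mathcal{D}(x^t,y^t)$ conditionally on the past, set $x^{t+1}=x^t-\eta_x G_x^t(x^t,y^t,z_x^t)$; draw $z_y^t$ with law $\mathcal{D}(x^{t+1},y^t)$ conditionally on the past (including $x^{t+1}$), set $y^{t+1}=y^t+\eta_y G_y^t(x^{t+1},y^t,z_y^t)$; then form $\psi^{t+1}$ by an arbitrary estimation rule. *)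

theory Defs
  imports "HOL-Probability.Probability"
begin

definition frob :: "real^'n^'d \<Rightarrow> real" where
  "frob A = sqrt (\<Sum>i\<in>UNIV. \<Sum>j\<in>UNIV. (A $ i $ j)^2)"

definition Dlaw :: "(real^'d) measure \<Rightarrow> (real^'n \<Rightarrow> real^'m \<Rightarrow> real^'d)
    \<Rightarrow> real^'n \<Rightarrow> real^'m \<Rightarrow> (real^'d) measure" where
  "Dlaw P \<psi> x y = distr P borel (\<lambda>\<xi>. \<psi> x y + \<xi>)"

end

theory Submission
  imports Defs
begin

lemma frob_nonneg: "0 \<le> frob M"
  unfolding frob_def by (intro real_sqrt_ge_zero sum_nonneg) simp

lemma frob_bound:
  fixes M :: "real^'k^'d" and v :: "real^'d"
  shows "norm (transpose M *v v) \<le> frob M * norm v"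
proof -
  have col: "\<bar>(transpose M *v v)$j\<bar> \<le> norm (\<chi> i. M$i$j) * norm v" for j
  proof -
    have "(transpose M *v v)$j = (\<chi> i. M$i$j) \<bullet> v"
      by (simp add: matrix_vector_mult_def transpose_def inner_vec_def)
    then show ?thesis using Cauchy_Schwarz_ineq2 by simp
  qed
  have nsq: "(norm (w::real^'a))\<^sup>2 = (\<Sum>i\<in>UNIV. (w$i)\<^sup>2)" for w
    unfolding power2_norm_eq_inner inner_vec_def by (simp add: power2_eq_square)
  have "(norm (transpose M *v v))\<^sup>2 = (\<Sum>j\<in>UNIV. ((transpose M *v v)$j)\<^sup>2)" by (rule nsq)
  also have "\<dots> \<le> (\<Sum>j\<in>UNIV. (norm (\<chi> i. M$i$j))\<^sup>2 * (norm v)\<^sup>2)"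
  proof (rule sum_mono)
    fix j
    have "((transpose M *v v)$j)\<^sup>2 = \<bar>(transpose M *v v)$j\<bar>\<^sup>2" by simp
    also have "\<dots> \<le> (norm (\<chi> i. M$i$j) * norm v)\<^sup>2"
      by (rule power_mono[OF col]) simp
    finally show "((transpose M *v v)$j)\<^sup>2 \<le> (norm (\<chi> i. M$i$j))\<^sup>2 * (norm v)\<^sup>2"
      by (simp add: power_mult_distrib)
  qed
  also have "\<dots> = (\<Sum>j\<in>UNIV. \<Sum>i\<in>UNIV. (M$i$j)\<^sup>2) * (norm v)\<^sup>2"
    by (simp add: nsq sum_distrib_right)
  also have "\<dots> = (frob M)\<^sup>2 * (norm v)\<^sup>2"
  proof -
    have "(frob M)\<^sup>2 = (\<Sum>i\<in>UNIV. \<Sum>j\<in>UNIV. (M$i$j)\<^sup>2)"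
      unfolding frob_def by (rule real_sqrt_pow2) (intro sum_nonneg, simp)
    also have "\<dots> = (\<Sum>j\<in>UNIV. \<Sum>i\<in>UNIV. (M$i$j)\<^sup>2)" by (rule sum.swap)
    finally show ?thesis by simp
  qed
  also have "\<dots> = (frob M * norm v)\<^sup>2" by (simp add: power_mult_distrib)
  finally show ?thesis
    by (rule power2_le_imp_le) (intro mult_nonneg_nonneg frob_nonneg norm_ge_zero)
qed

lemma transpose_diff: "transpose (A - B) = transpose A - (transpose B :: real^'a^'b)"
  by (simp add: transpose_def vec_eq_iff)

lemma sq_aux:
  fixes a b F :: real
  assumes "0 \<le> a" "0 \<le> b" "0 \<le> F" "u \<le> a + F * b" "0 \<le> u"
  shows "u\<^sup>2 \<le> (1 + F\<^sup>2) * (a\<^sup>2 + b\<^sup>2)"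
proof -
  have "u\<^sup>2 \<le> (a + F * b)\<^sup>2" using assms by (intro power_mono) auto
  also have "\<dots> \<le> (1 + F\<^sup>2) * (a\<^sup>2 + b\<^sup>2)"
  proof -
    have "(1 + F\<^sup>2) * (a\<^sup>2 + b\<^sup>2) - (a + F * b)\<^sup>2 = (F*a - b)\<^sup>2"
      by (simp add: power2_eq_square algebra_simps)
    then show ?thesis using zero_le_power2[of "F*a - b"] by linarith
  qed
  finally show ?thesis .
qed

lemma norm_expand:
  fixes u c :: "'a::real_inner"
  shows "(norm u)\<^sup>2 = (norm c)\<^sup>2 + 2 * (c \<bullet> (u - c)) + (norm (u - c))\<^sup>2"
  unfolding power2_norm_eq_inner inner_diff_left inner_diff_right
  by (simp add: inner_commute)

lemma main_aux:
  fixes D :: "(real^'d) measure" and g :: "real^'d \<Rightarrow> real^'k" and h :: "real^'d \<Rightarrow> real^'d"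
    and A B :: "real^'k^'d" and L1 \<sigma> :: real
  assumes D: "prob_space D" and g[measurable]: "g \<in> borel_measurable D"
    and h[measurable]: "h \<in> borel_measurable D"
    and Ah: "(\<integral>\<^sup>+z. ennreal (norm (h z)) \<partial>D) \<le> ennreal L1"
    and V: "(\<integral>\<^sup>+z. ennreal ((norm (g z - (\<integral>w. g w \<partial>D)))\<^sup>2 + (norm (h z - (\<integral>w. h w \<partial>D)))\<^sup>2) \<partial>D)
               \<le> ennreal (\<sigma>\<^sup>2)"
    and L1: "L1 \<ge> 0"
  shows "norm ((\<integral>z. g z + transpose A *v h z \<partial>D) - (\<integral>z. g z + transpose B *v h z \<partial>D))
           \<le> L1 * frob (A - B)"
    and "(\<integral>\<^sup>+z. ennreal ((norm (g z + transpose A *v h z))\<^sup>2) \<partial>D)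
           \<le> ennreal ((norm (\<integral>z. g z + transpose A *v h z \<partial>D))\<^sup>2 + (1 + (frob A)\<^sup>2) * \<sigma>\<^sup>2)"
proof -
  interpret D: prob_space D by fact
  have ig: "integrable D g"
  proof -
    let ?Ig = "\<integral>w. g w \<partial>D" and ?Ih = "\<integral>w. h w \<partial>D"
    have "(\<integral>\<^sup>+z. ennreal (norm (g z - ?Ig)) \<partial>D)
        \<le> (\<integral>\<^sup>+z. ennreal 1 + ennreal ((norm (g z - ?Ig))\<^sup>2 + (norm (h z - ?Ih))\<^sup>2) \<partial>D)"
    proof (rule nn_integral_mono)
      fix z
      have "norm (g z - ?Ig) \<le> 1 + ((norm (g z - ?Ig))\<^sup>2 + (norm (h z - ?Ih))\<^sup>2)"
      proof -
        have "norm (g z - ?Ig) \<le> 1 + (norm (g z - ?Ig))\<^sup>2"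
          using zero_le_power2[of "norm (g z - ?Ig) - 1"]
          by (simp add: power2_eq_square algebra_simps) (smt (verit) norm_ge_zero mult_nonneg_nonneg)
        then show ?thesis using zero_le_power2[of "norm (h z - ?Ih)"] by linarith
      qed
      then have "ennreal (norm (g z - ?Ig))
          \<le> ennreal (1 + ((norm (g z - ?Ig))\<^sup>2 + (norm (h z - ?Ih))\<^sup>2))"
        by (rule ennreal_leI)
      also have "\<dots> = ennreal 1 + ennreal ((norm (g z - ?Ig))\<^sup>2 + (norm (h z - ?Ih))\<^sup>2)"
        by (rule ennreal_plus) simp_all
      finally show "ennreal (norm (g z - ?Ig))
          \<le> ennreal 1 + ennreal ((norm (g z - ?Ig))\<^sup>2 + (norm (h z - ?Ih))\<^sup>2)" .
    qed
    also have "\<dots> = (\<integral>\<^sup>+z. ennreal 1 \<partial>D) + (\<integral>\<^sup>+z. ennreal ((norm (g z - ?Ig))\<^sup>2 + (norm (h z - ?Ih))\<^sup>2) \<partial>D)"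
      by (rule nn_integral_add) measurable
    also have "\<dots> \<le> (\<integral>\<^sup>+z. ennreal 1 \<partial>D) + ennreal (\<sigma>\<^sup>2)"
      using V by (rule add_left_mono)
    also have "\<dots> < \<infinity>" by (simp add: D.emeasure_space_1)
    finally have "integrable D (\<lambda>z. g z - ?Ig)"
      by (intro integrableI_bounded) simp_all
    then have "integrable D (\<lambda>z. (g z - ?Ig) + ?Ig)"
      by (intro Bochner_Integration.integrable_add D.integrable_const)
    then show ?thesis by simp
  qed
  have ih: "integrable D h"
    by (rule integrableI_bounded) (use Ah in \<open>auto simp: le_less_trans[OF _ ennreal_less_top]\<close>)
  have iA: "integrable D (\<lambda>z. transpose M *v h z)" for M :: "real^'k^'d"
    by (rule integrable_bounded_linear[OF matrix_vector_mul_bounded_linear ih])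
  have intA: "(\<integral>z. transpose M *v h z \<partial>D) = transpose M *v (\<integral>z. h z \<partial>D)" for M :: "real^'k^'d"
    by (rule integral_bounded_linear[OF matrix_vector_mul_bounded_linear ih])
  have split: "(\<integral>z. g z + transpose M *v h z \<partial>D) = (\<integral>z. g z \<partial>D) + transpose M *v (\<integral>z. h z \<partial>D)"
    for M :: "real^'k^'d"
    unfolding Bochner_Integration.integral_add[OF ig iA] intA ..
  have inh: "(\<integral>z. norm (h z) \<partial>D) \<le> L1"
  proof -
    have "ennreal (\<integral>z. norm (h z) \<partial>D) = (\<integral>\<^sup>+z. ennreal (norm (h z)) \<partial>D)"
      by (rule nn_integral_eq_integral[symmetric]) (auto intro: integrable_norm ih)
    with Ah have "ennreal (\<integral>z. norm (h z) \<partial>D) \<le> ennreal L1" by simp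
    then show ?thesis using ennreal_le_iff[OF L1] by blast
  qed
  have nIh: "norm (\<integral>z. h z \<partial>D) \<le> L1"
    using integral_norm_bound[of D h] inh by linarith
  show "norm ((\<integral>z. g z + transpose A *v h z \<partial>D) - (\<integral>z. g z + transpose B *v h z \<partial>D))
           \<le> L1 * frob (A - B)"
  proof -
    have eq: "(\<integral>z. g z + transpose A *v h z \<partial>D) - (\<integral>z. g z + transpose B *v h z \<partial>D)
          = transpose (A - B) *v (\<integral>z. h z \<partial>D)"
      unfolding split transpose_diff matrix_vector_mult_diff_rdistrib by simp
    have "norm (transpose (A - B) *v (\<integral>z. h z \<partial>D)) \<le> frob (A - B) * norm (\<integral>z. h z \<partial>D)"
      by (rule frob_bound)
    also have "\<dots> \<le> frob (A - B) * L1"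
      by (rule mult_left_mono[OF nIh frob_nonneg])
    finally have "norm (transpose (A - B) *v (\<integral>z. h z \<partial>D)) \<le> L1 * frob (A - B)"
      by (simp only: mult.commute)
    then show ?thesis unfolding eq .
  qed
  define c where "c = (\<integral>z. g z + transpose A *v h z \<partial>D)"
  define F where "F = frob A"
  have F0: "0 \<le> F" unfolding F_def by (rule frob_nonneg)
  have pt: "(norm (g z + transpose A *v h z - c))\<^sup>2
      \<le> (1 + F\<^sup>2) * ((norm (g z - (\<integral>w. g w \<partial>D)))\<^sup>2 + (norm (h z - (\<integral>w. h w \<partial>D)))\<^sup>2)" for z
  proof (rule sq_aux[OF norm_ge_zero norm_ge_zero F0 _ norm_ge_zero])
    have "g z + transpose A *v h z - c
        = (g z - (\<integral>w. g w \<partial>D)) + transpose A *v (h z - (\<integral>w. h w \<partial>D))"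
      unfolding c_def split matrix_vector_mult_diff_distrib by (simp add: algebra_simps)
    then have "norm (g z + transpose A *v h z - c)
        \<le> norm (g z - (\<integral>w. g w \<partial>D)) + norm (transpose A *v (h z - (\<integral>w. h w \<partial>D)))"
      by (metis norm_triangle_ineq)
    also have "\<dots> \<le> norm (g z - (\<integral>w. g w \<partial>D)) + F * norm (h z - (\<integral>w. h w \<partial>D))"
      unfolding F_def using frob_bound by (intro add_left_mono) blast
    finally show "norm (g z + transpose A *v h z - c)
        \<le> norm (g z - (\<integral>w. g w \<partial>D)) + F * norm (h z - (\<integral>w. h w \<partial>D))" .
  qed
  have nnD: "(\<integral>\<^sup>+z. ennreal ((norm (g z + transpose A *v h z - c))\<^sup>2) \<partial>D) \<le> ennreal ((1 + F\<^sup>2) * \<sigma>\<^sup>2)"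
  proof -
    have "(\<integral>\<^sup>+z. ennreal ((norm (g z + transpose A *v h z - c))\<^sup>2) \<partial>D)
       \<le> (\<integral>\<^sup>+z. ennreal (1 + F\<^sup>2) * ennreal ((norm (g z - (\<integral>w. g w \<partial>D)))\<^sup>2 + (norm (h z - (\<integral>w. h w \<partial>D)))\<^sup>2) \<partial>D)"
    proof (rule nn_integral_mono)
      fix z
      have "ennreal ((1 + F\<^sup>2) * ((norm (g z - (\<integral>w. g w \<partial>D)))\<^sup>2 + (norm (h z - (\<integral>w. h w \<partial>D)))\<^sup>2))
          = ennreal (1 + F\<^sup>2) * ennreal ((norm (g z - (\<integral>w. g w \<partial>D)))\<^sup>2 + (norm (h z - (\<integral>w. h w \<partial>D)))\<^sup>2)"
        by (rule ennreal_mult) simp_all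
      with ennreal_leI[OF pt[of z]]
      show "ennreal ((norm (g z + transpose A *v h z - c))\<^sup>2)
          \<le> ennreal (1 + F\<^sup>2) * ennreal ((norm (g z - (\<integral>w. g w \<partial>D)))\<^sup>2 + (norm (h z - (\<integral>w. h w \<partial>D)))\<^sup>2)"
        by simp
    qed
    also have "\<dots> = ennreal (1 + F\<^sup>2) * (\<integral>\<^sup>+z. ennreal ((norm (g z - (\<integral>w. g w \<partial>D)))\<^sup>2 + (norm (h z - (\<integral>w. h w \<partial>D)))\<^sup>2) \<partial>D)"
      by (rule nn_integral_cmult) measurable
    also have "\<dots> \<le> ennreal (1 + F\<^sup>2) * ennreal (\<sigma>\<^sup>2)"
      by (rule mult_left_mono[OF V]) simp
    also have "\<dots> = ennreal ((1 + F\<^sup>2) * \<sigma>\<^sup>2)"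
      by (rule ennreal_mult[symmetric]) simp_all
    finally show ?thesis .
  qed
  have hA[measurable]: "(\<lambda>z. transpose A *v h z) \<in> borel_measurable D"
    using iA by (rule borel_measurable_integrable)
  have mD: "(\<lambda>z. (norm (g z + transpose A *v h z - c))\<^sup>2) \<in> borel_measurable D"
    by measurable
  have iD: "integrable D (\<lambda>z. (norm (g z + transpose A *v h z - c))\<^sup>2)"
    by (rule integrableI_bounded[OF mD]) (use nnD in \<open>auto simp: le_less_trans[OF _ ennreal_less_top]\<close>)
  have intD: "(\<integral>z. (norm (g z + transpose A *v h z - c))\<^sup>2 \<partial>D) \<le> (1 + F\<^sup>2) * \<sigma>\<^sup>2"
  proof -
    have "ennreal (\<integral>z. (norm (g z + transpose A *v h z - c))\<^sup>2 \<partial>D)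
          = (\<integral>\<^sup>+z. ennreal ((norm (g z + transpose A *v h z - c))\<^sup>2) \<partial>D)"
      by (rule nn_integral_eq_integral[OF iD, symmetric]) simp
    with nnD have "ennreal (\<integral>z. (norm (g z + transpose A *v h z - c))\<^sup>2 \<partial>D) \<le> ennreal ((1 + F\<^sup>2) * \<sigma>\<^sup>2)" by simp
    moreover have "0 \<le> (1 + F\<^sup>2) * \<sigma>\<^sup>2" by simp
    ultimately show ?thesis using ennreal_le_iff by blast
  qed
  have iG: "integrable D (\<lambda>z. g z + transpose A *v h z)"
    using ig iA by (rule Bochner_Integration.integrable_add)
  have iC: "integrable D (\<lambda>z. c \<bullet> (g z + transpose A *v h z - c))"
    by (intro integrable_inner_right Bochner_Integration.integrable_diff iG D.integrable_const)
  have expand: "(norm (g z + transpose A *v h z))\<^sup>2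
      = (norm c)\<^sup>2 + 2 * (c \<bullet> (g z + transpose A *v h z - c)) + (norm (g z + transpose A *v h z - c))\<^sup>2" for z
    by (rule norm_expand)
  have i3: "integrable D (\<lambda>z. (norm c)\<^sup>2 + 2 * (c \<bullet> (g z + transpose A *v h z - c))
                 + (norm (g z + transpose A *v h z - c))\<^sup>2)"
    by (intro Bochner_Integration.integrable_add integrable_mult_right D.integrable_const iC iD)
  have iN: "integrable D (\<lambda>z. (norm (g z + transpose A *v h z))\<^sup>2)"
    using i3 by (simp only: expand)
  have cross: "(\<integral>z. c \<bullet> (g z + transpose A *v h z - c) \<partial>D) = 0"
    using iG by (simp add: Bochner_Integration.integral_diff c_def D.prob_space)
  have "(\<integral>z. (norm (g z + transpose A *v h z))\<^sup>2 \<partial>D)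
      = (\<integral>z. (norm c)\<^sup>2 + 2 * (c \<bullet> (g z + transpose A *v h z - c))
                 + (norm (g z + transpose A *v h z - c))\<^sup>2 \<partial>D)"
    by (simp only: expand)
  also have "\<dots> = (norm c)\<^sup>2 + 2 * (\<integral>z. c \<bullet> (g z + transpose A *v h z - c) \<partial>D)
                 + (\<integral>z. (norm (g z + transpose A *v h z - c))\<^sup>2 \<partial>D)"
    using iC iD by (simp add: Bochner_Integration.integral_add D.prob_space)
  also have "\<dots> \<le> (norm c)\<^sup>2 + (1 + F\<^sup>2) * \<sigma>\<^sup>2"
    using cross intD by simp
  finally have bound: "(\<integral>z. (norm (g z + transpose A *v h z))\<^sup>2 \<partial>D) \<le> (norm c)\<^sup>2 + (1 + F\<^sup>2) * \<sigma>\<^sup>2" .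
  have "(\<integral>\<^sup>+z. ennreal ((norm (g z + transpose A *v h z))\<^sup>2) \<partial>D)
        = ennreal (\<integral>z. (norm (g z + transpose A *v h z))\<^sup>2 \<partial>D)"
    by (rule nn_integral_eq_integral[OF iN]) simp
  also have "\<dots> \<le> ennreal ((norm c)\<^sup>2 + (1 + F\<^sup>2) * \<sigma>\<^sup>2)"
    using bound by (rule ennreal_leI)
  finally show "(\<integral>\<^sup>+z. ennreal ((norm (g z + transpose A *v h z))\<^sup>2) \<partial>D)
           \<le> ennreal ((norm (\<integral>z. g z + transpose A *v h z \<partial>D))\<^sup>2 + (1 + (frob A)\<^sup>2) * \<sigma>\<^sup>2)"
    by (simp add: c_def F_def)
qed

theorem lemma2p2:
  fixes l :: "real^'n \<Rightarrow> real^'m \<Rightarrow> real^'d \<Rightarrow> real"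
    and gx :: "real^'n \<Rightarrow> real^'m \<Rightarrow> real^'d \<Rightarrow> real^'n"
    and gy :: "real^'n \<Rightarrow> real^'m \<Rightarrow> real^'d \<Rightarrow> real^'m"
    and gz :: "real^'n \<Rightarrow> real^'m \<Rightarrow> real^'d \<Rightarrow> real^'d"
    and P :: "(real^'d) measure"
    and \<psi> :: "real^'n \<Rightarrow> real^'m \<Rightarrow> real^'d"
    and Jx :: "real^'n \<Rightarrow> real^'m \<Rightarrow> real^'n^'d"
    and Jy :: "real^'n \<Rightarrow> real^'m \<Rightarrow> real^'m^'d"
    and gLx :: "real^'n \<Rightarrow> real^'m \<Rightarrow> real^'n"
    and gLy :: "real^'n \<Rightarrow> real^'m \<Rightarrow> real^'m"
    and \<psi>t :: "real^'n \<Rightarrow> real^'m \<Rightarrow> real^'d"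
    and Jtx :: "real^'n \<Rightarrow> real^'m \<Rightarrow> real^'n^'d"
    and Jty :: "real^'n \<Rightarrow> real^'m \<Rightarrow> real^'m^'d"
    and L0 ell0 L1 \<sigma> :: real
    and x :: "real^'n" and y :: "real^'m"
  assumes consts_pos: "L0 > 0" "ell0 > 0" "L1 > 0" "\<sigma> > 0"
    \<comment> \<open>l is continuously differentiable with partial gradients gx, gy, gz\<close>
    and l_dx: "\<And>a b c. ((\<lambda>u. l u b c) has_derivative (\<lambda>h. gx a b c \<bullet> h)) (at a)"
    and l_dy: "\<And>a b c. ((\<lambda>v. l a v c) has_derivative (\<lambda>h. gy a b c \<bullet> h)) (at b)"
    and l_dz: "\<And>a b c. ((\<lambda>w. l a b w) has_derivative (\<lambda>h. gz a b c \<bullet> h)) (at c)"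
    and gx_cont: "continuous_on UNIV (\<lambda>(a,b,c). gx a b c)"
    and gy_cont: "continuous_on UNIV (\<lambda>(a,b,c). gy a b c)"
    and gz_cont: "continuous_on UNIV (\<lambda>(a,b,c). gz a b c)"
    \<comment> \<open>P is a probability measure on R^d\<close>
    and P_prob: "prob_space P" and P_sets: "sets P = sets borel"
    \<comment> \<open>psi is differentiable with partial Jacobians Jx, Jy\<close>
    and psi_dx: "\<And>a b. ((\<lambda>u. \<psi> u b) has_derivative (\<lambda>h. Jx a b *v h)) (at a)"
    and psi_dy: "\<And>a b. ((\<lambda>v. \<psi> a v) has_derivative (\<lambda>h. Jy a b *v h)) (at b)"
    \<comment> \<open>L(x,y) = E_{z ~ D(x,y)} l(x,y,z) is differentiable with the stated gradients\<close>
    and L_dx: "\<And>a b. ((\<lambda>u. \<integral>z. l u b z \<partial>(Dlaw P \<psi> u b)) has_derivative (\<lambda>h. gLx a b \<bullet> h)) (at a)"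
    and L_dy: "\<And>a b. ((\<lambda>v. \<integral>z. l a v z \<partial>(Dlaw P \<psi> a v)) has_derivative (\<lambda>h. gLy a b \<bullet> h)) (at b)"
    and gLx_eq: "\<And>a b. gLx a b = (\<integral>z. gx a b z + transpose (Jx a b) *v gz a b z \<partial>(Dlaw P \<psi> a b))"
    and gLy_eq: "\<And>a b. gLy a b = (\<integral>z. gy a b z + transpose (Jy a b) *v gz a b z \<partial>(Dlaw P \<psi> a b))"
    \<comment> \<open>(A3)\<close>
    and A3x: "\<And>a b. (\<integral>\<^sup>+z. ennreal (norm (gx a b z)) \<partial>(Dlaw P \<psi> a b)) \<le> ennreal L1"
    and A3z: "\<And>a b. (\<integral>\<^sup>+z. ennreal (norm (gz a b z)) \<partial>(Dlaw P \<psi> a b)) \<le> ennreal L1"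
    \<comment> \<open>(A4)\<close>
    and A4xz: "\<And>a b. (\<integral>\<^sup>+z. ennreal ((norm (gx a b z - (\<integral>w. gx a b w \<partial>(Dlaw P \<psi> a b))))\<^sup>2
                 + (norm (gz a b z - (\<integral>w. gz a b w \<partial>(Dlaw P \<psi> a b))))\<^sup>2) \<partial>(Dlaw P \<psi> a b))
               \<le> ennreal (\<sigma>\<^sup>2)"
    and A4yz: "\<And>a b. (\<integral>\<^sup>+z. ennreal ((norm (gy a b z - (\<integral>w. gy a b w \<partial>(Dlaw P \<psi> a b))))\<^sup>2
                 + (norm (gz a b z - (\<integral>w. gz a b w \<partial>(Dlaw P \<psi> a b))))\<^sup>2) \<partial>(Dlaw P \<psi> a b))
               \<le> ennreal (\<sigma>\<^sup>2)"
    \<comment> \<open>(A5): psi is L0-Lipschitz and l0-smooth (Jacobian l0-Lipschitz in Frobenius norm)\<close>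
    and A5_lip: "\<And>a b a' b'. norm (\<psi> a b - \<psi> a' b') \<le> L0 * norm ((a, b) - (a', b'))"
    and A5_smooth: "\<And>a b a' b'. sqrt ((frob (Jx a b - Jx a' b'))\<^sup>2 + (frob (Jy a b - Jy a' b'))\<^sup>2)
                     \<le> ell0 * norm ((a, b) - (a', b'))"
    \<comment> \<open>the current estimate psi^t: a differentiable map with partial Jacobians Jtx, Jty\<close>
    and psit_dx: "\<And>a b. ((\<lambda>u. \<psi>t u b) has_derivative (\<lambda>h. Jtx a b *v h)) (at a)"
    and psit_dy: "\<And>a b. ((\<lambda>v. \<psi>t a v) has_derivative (\<lambda>h. Jty a b *v h)) (at b)"
  shows
    "norm ((\<integral>z. gx x y z + transpose (Jtx x y) *v gz x y z \<partial>(Dlaw P \<psi> x y)) - gLx x y)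
       \<le> L1 * frob (Jtx x y - Jx x y)
     \<and> (\<integral>\<^sup>+z. ennreal ((norm (gx x y z + transpose (Jtx x y) *v gz x y z))\<^sup>2) \<partial>(Dlaw P \<psi> x y))
       \<le> ennreal ((norm (\<integral>z. gx x y z + transpose (Jtx x y) *v gz x y z \<partial>(Dlaw P \<psi> x y)))\<^sup>2
                  + (1 + (frob (Jtx x y))\<^sup>2) * \<sigma>\<^sup>2)
     \<and> norm ((\<integral>z. gy x y z + transpose (Jty x y) *v gz x y z \<partial>(Dlaw P \<psi> x y)) - gLy x y)
       \<le> L1 * frob (Jty x y - Jy x y)
     \<and> (\<integral>\<^sup>+z. ennreal ((norm (gy x y z + transpose (Jty x y) *v gz x y z))\<^sup>2) \<partial>(Dlaw P \<psi> x y))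
       \<le> ennreal ((norm (\<integral>z. gy x y z + transpose (Jty x y) *v gz x y z \<partial>(Dlaw P \<psi> x y)))\<^sup>2
                  + (1 + (frob (Jty x y))\<^sup>2) * \<sigma>\<^sup>2)"
proof -
  define D where "D = Dlaw P \<psi> x y"
  have mshift: "(\<lambda>\<xi>. \<psi> x y + \<xi>) \<in> measurable P borel"
    unfolding measurable_cong_sets[OF P_sets refl] by measurable
  have D: "prob_space D"
    unfolding D_def Dlaw_def using prob_space.prob_space_distr[OF P_prob mshift] .
  have Dsets: "sets D = sets borel" unfolding D_def Dlaw_def by simp
  have meas: "f \<in> borel_measurable D" if "continuous_on UNIV (\<lambda>(a,b,c). f' a b c)" and "f = f' x y"
    for f :: "real^'d \<Rightarrow> 'z::{real_normed_vector,second_countable_topology}" and f'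
  proof -
    have "continuous_on UNIV ((\<lambda>(a,b,c). f' a b c) \<circ> (\<lambda>z. (x, y, z)))"
      by (rule continuous_on_compose[OF _ continuous_on_subset[OF that(1)]])
         (auto intro!: continuous_intros)
    then have "continuous_on UNIV f" using that(2) by (simp add: o_def)
    then show ?thesis
      unfolding measurable_cong_sets[OF Dsets refl] by (rule borel_measurable_continuous_onI)
  qed
  have mx: "gx x y \<in> borel_measurable D" by (rule meas[OF gx_cont refl])
  have my: "gy x y \<in> borel_measurable D" by (rule meas[OF gy_cont refl])
  have mz: "gz x y \<in> borel_measurable D" by (rule meas[OF gz_cont refl])
  have L1: "0 \<le> L1" using consts_pos by simp
  note X = main_aux[OF D mx mz A3z[of x y, folded D_def]
      A4xz[of x y, folded D_def] L1]
  note Y = main_aux[OF D my mz A3z[of x y, folded D_def] A4yz[of x y, folded D_def] L1]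
  show ?thesis
    unfolding gLx_eq gLy_eq D_def[symmetric]
    using X(1)[of "Jtx x y" "Jx x y"] X(2)[of "Jtx x y"] Y(1)[of "Jty x y" "Jy x y"] Y(2)[of "Jty x y"] by blast
qed

end
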